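(* Let $n$ be a positive integer and $k$ an integer with $0\le k\le n$. Then $$e_k\left(\left\{\csc^2\left(\tfrac{(2j-1)\pi}{4n}\right) : j=1,\dots,n\right\}\right) = \frac{n\,(n+k-1)!\,4^k}{(n-k)!\,(2k)!}.$$
   Context: $e_k(\alpha_1,\dots,\alpha_n)$ denotes the degree-$k$ elementary symmetric function of $\alpha_1,\dots,\alpha_n$ (with $e_0=1$). *)

theory Defs
  imports Complex_Main
begin

definition elem_sym :: "nat \<Rightarrow> ('i \<Rightarrow> real) \<Rightarrow> 'i set \<Rightarrow> real" where
  "elem_sym k a I = (\<Sum>S\<in>{S. S \<subseteq> I \<and> card S = k}. \<Prod>i\<in>S. a i)"

definition csc :: "real \<Rightarrow> real" where
  "csc x = 1 / sin x"

end

theory Submission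
  imports Defs "HOL-Computational_Algebra.Polynomial"
begin

fun pA :: "nat \<Rightarrow> real poly" where
  "pA 0 = 1"
| "pA (Suc 0) = [:1, -4:]"
| "pA (Suc (Suc n)) = smult 2 ([:1,-2:] * pA (Suc n)) - pA n"

lemma cos_sum_prod: "cos (a + b) + cos (a - b) = 2 * cos a * cos (b::real)"
  by (simp add: cos_add cos_diff)

lemma pA_trig: "cos t * poly (pA n) (sin t ^ 2) = cos ((2 * real n + 1) * t)"
proof (induction n rule: pA.induct)
  case 1 then show ?case by simp
next
  case 2
  have "cos (3 * t) = 4 * cos t ^ 3 - 3 * cos t" by (rule cos_treble_cos)
  moreover have "sin t ^ 2 = 1 - cos t ^ 2" by (simp add: sin_squared_eq)
  ultimately show ?case by (simp only: pA.simps poly_pCons poly_0 mult_0_right add_0_right) (simp add: algebra_simps power3_eq_cube power2_eq_square)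
next
  case (3 n)
  have e: "cos ((2 * real (Suc (Suc n)) + 1) * t) + cos ((2 * real n + 1) * t)
     = 2 * cos ((2 * real (Suc n) + 1) * t) * cos (2 * t)"
    using cos_sum_prod[of "(2 * real (Suc n) + 1) * t" "2*t"]
    by (simp add: algebra_simps)
  have c2: "cos (2 * t) = 1 - 2 * sin t ^ 2" by (rule cos_double_sin)
  have "cos t * poly (pA (Suc (Suc n))) (sin t ^ 2)
     = 2 * (1 - 2 * sin t ^ 2) * (cos t * poly (pA (Suc n)) (sin t ^ 2)) - cos t * poly (pA n) (sin t ^ 2)"
    by (simp add: algebra_simps)
  also have "\<dots> = cos ((2 * real (Suc (Suc n)) + 1) * t)"
    using 3 e unfolding c2 by (simp add: algebra_simps)
  finally show ?case .
qed

lemma binom_rec: "(m + 2 choose (2*j+2)) + (m choose (2*j+2)) = 2 * (m+1 choose (2*j+2)) + (m choose (2*j))"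
  by (simp add: numeral_2_eq_2)

lemma pA_coeff: "coeff (pA n) k = real ((n + k) choose (2 * k)) * (-4) ^ k"
proof (induction n arbitrary: k rule: pA.induct)
  case 1 show ?case
  proof (cases k)
    case (Suc j)
    have h2: "0 + k choose (2 * k) = 0" by (rule binomial_eq_0) (simp add: Suc)
    have h1: "coeff (pA 0) k = 0" by (simp add: Suc)
    show ?thesis by (simp only: h1 h2 of_nat_0 mult_zero_left)
  qed simp
next
  case 2
  consider "k = 0" | "k = 1" | "k \<ge> 2" by linarith
  then show ?case
  proof cases
    case 3
    then obtain j where j: "k = Suc (Suc j)" by (metis add_2_eq_Suc le_Suc_ex)
    have h2: "Suc 0 + k choose (2 * k) = 0" by (rule binomial_eq_0) (simp add: j)
    have h1: "coeff (pA (Suc 0)) k = 0" by (simp add: j)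
    show ?thesis by (simp only: h1 h2 of_nat_0 mult_zero_left)
  qed (auto simp: numeral_2_eq_2)
next
  case (3 n)
  show ?case
  proof (cases k)
    case 0 then show ?thesis by (simp add: 3 mult_pCons_left)
  next
    case (Suc j)
    have b: "real (n + 2 + Suc j choose (2*j+2)) + real (n + Suc j choose (2*j+2))
       = 2 * real (n + 1 + Suc j choose (2*j+2)) + real (n + Suc j choose (2*j))"
    proof -
      have e1: "n + 2 + Suc j = (n + Suc j) + 2" and e2: "n + 1 + Suc j = (n + Suc j) + 1" by simp_all
      have b0: "(n + 2 + Suc j choose (2*j+2)) + (n + Suc j choose (2*j+2)) = 2 * (n + 1 + Suc j choose (2*j+2)) + (n + Suc j choose (2*j))"
        by (subst e1, subst e2, rule binom_rec)
      show ?thesis using arg_cong[OF b0, of real] by (simp only: of_nat_add of_nat_mult of_nat_numeral)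
    qed
    have "coeff (pA (Suc (Suc n))) k = 2 * (coeff (pA (Suc n)) (Suc j) - 2 * coeff (pA (Suc n)) j) - coeff (pA n) (Suc j)"
      by (simp add: Suc mult_pCons_left)
    also have "\<dots> = (2 * real (n + 1 + Suc j choose (2*j+2)) + real (n + Suc j choose (2*j))
         - real (n + Suc j choose (2*j+2))) * (-4) ^ Suc j"
      using 3 by (simp add: algebra_simps)
    also have "\<dots> = real (n + 2 + Suc j choose (2*j+2)) * (-4) ^ Suc j"
    proof -
      have "2 * real (n + 1 + Suc j choose (2*j+2)) + real (n + Suc j choose (2*j))
         - real (n + Suc j choose (2*j+2)) = real (n + 2 + Suc j choose (2*j+2))" using b by linarith
      then show ?thesis by (simp only:)
    qed
    finally show ?thesis by (simp add: Suc)
  qed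
qed

lemma elem_sym_0: "finite I \<Longrightarrow> elem_sym 0 a I = 1"
proof -
  assume "finite I"
  then have "{S. S \<subseteq> I \<and> card S = 0} = {{}}" by (auto dest: finite_subset)
  then show ?thesis by (simp add: elem_sym_def)
qed

lemma vieta:
  assumes "finite I" "k \<le> card I"
  shows "coeff (\<Prod>i\<in>I. [:- a i, 1:]) (card I - k) = (-1)^k * elem_sym k a I"
proof -
  have "(\<Prod>i\<in>I. [:- a i, 1:]) = (\<Prod>i\<in>I. [:- a i:] + [:0,1:])" by simp
  also have "\<dots> = (\<Sum>B\<in>Pow I. (\<Prod>i\<in>B. [:- a i:]) * (\<Prod>i\<in>I-B. [:0,1:]))"
    by (rule prod_add[OF assms(1)])
  also have "\<dots> = (\<Sum>B\<in>Pow I. monom ((-1) ^ card B * prod a B) (card I - card B))"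
  proof (rule sum.cong[OF refl])
    fix B assume B: "B \<in> Pow I"
    then have fB: "finite B" "B \<subseteq> I" using assms(1) finite_subset by auto
    have f1: "(\<Prod>i\<in>B. [:- a i:]) = [:(-1) ^ card B * prod a B:]"
      by (simp add: prod_to_poly prod_uminus)
    have f2: "(\<Prod>i\<in>I-B. [:0,1:]) = monom 1 (card I - card B)"
      using fB assms(1) by (simp add: monom_altdef card_Diff_subset)
    have f3: "[:(-1) ^ card B * prod a B:] * monom 1 (card I - card B) = monom ((-1) ^ card B * prod a B) (card I - card B)"
      by (simp add: smult_monom)
    show "(\<Prod>i\<in>B. [:- a i:]) * (\<Prod>i\<in>I-B. [:0,1:]) = monom ((-1) ^ card B * prod a B) (card I - card B)"
      by (simp only: f1 f2 f3)
  qed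
  also have "coeff \<dots> (card I - k) = (\<Sum>B\<in>Pow I. if card B = k then (-1) ^ k * prod a B else 0)"
    unfolding coeff_sum
  proof (rule sum.cong[OF refl])
    fix B assume B: "B \<in> Pow I"
    then have "card B \<le> card I" using assms(1) by (simp add: card_mono)
    then show "coeff (monom ((-1) ^ card B * prod a B) (card I - card B)) (card I - k) =
      (if card B = k then (-1) ^ k * prod a B else 0)" using assms(2) by auto
  qed
  also have "\<dots> = (\<Sum>B\<in>{B\<in>Pow I. card B = k}. (-1) ^ k * prod a B)"
    by (rule sum.inter_filter[symmetric]) (simp add: assms(1))
  also have "{B\<in>Pow I. card B = k} = {S. S \<subseteq> I \<and> card S = k}" by auto
  finally show ?thesis by (simp add: elem_sym_def sum_distrib_left)
qed


definition bb :: "nat \<Rightarrow> nat \<Rightarrow> real" where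
  "bb n k = real n * fact (n + k - 1) * 4 ^ k / (fact (n - k) * fact (2 * k))"

definition pP :: "nat \<Rightarrow> real poly" where
  "pP n = smult (1/2) (pA n + pA (n - 1))"

lemma bb_alt:
  assumes "1 \<le> n" "k \<le> n"
  shows "bb n k = 4 ^ k * (real (n + k choose (2*k)) + real (n - 1 + k choose (2*k))) / 2"
proof (cases "k = n")
  case True
  then obtain m where m: "n = Suc m" using assms by (cases n) auto
  have z: "n - 1 + k choose (2*k) = 0" by (rule binomial_eq_0) (use True m in simp)
  have "bb n k = real n * fact (Suc (2*m)) * 4 ^ k / fact (Suc (Suc (2*m)))"
  proof -
    have "n + k - 1 = Suc (2*m)" "n - k = 0" "2*k = Suc (Suc (2*m))" using True m by simp_all
    then show ?thesis unfolding bb_def by (simp only: fact_0 mult_1)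
  qed
  also have "\<dots> = 4 ^ k / 2"
  proof -
    have f: "fact (Suc (Suc (2*m))) = (2 * real n) * (fact (Suc (2*m)) :: real)"
      by (subst fact_Suc) (simp add: m)
    have p: "(fact (Suc (2*m)) :: real) > 0" "real n > 0" using m by simp_all
    have g: "\<And>F N c. (F::real) > 0 \<Longrightarrow> N > 0 \<Longrightarrow> N * F * c / (2 * N * F) = c / 2"
      by (simp add: field_simps)
    show ?thesis unfolding f by (rule g[OF p])
  qed
  finally have r: "bb n k = 4 ^ k / 2" .
  have nk: "n + k = 2*k" using True by simp
  have z1: "real (n + k choose (2*k)) = 1" by (simp only: nk binomial_n_n of_nat_1)
  have z2: "real (n - 1 + k choose (2*k)) = 0" using z by simp
  show ?thesis using r by (simp only: z1 z2 add_0_right mult_1_right)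
next
  case False
  then have "k < n" using assms by simp
  then obtain m0 where "n = Suc (k + m0)" using less_imp_Suc_add by blast
  then obtain m where m: "n = k + Suc m" by simp
  have c1: "real (n + k choose (2*k)) = fact (Suc (2*k+m)) / (fact (2*k) * fact (Suc m))"
  proof -
    have a: "real (Suc (2*k+m) choose (2*k)) = fact (Suc (2*k+m)) / (fact (2*k) * fact (Suc (2*k+m) - 2*k))"
      by (rule binomial_fact) simp
    have b: "Suc (2*k+m) - 2*k = Suc m" "n + k = Suc (2*k+m)" using m by simp_all
    show ?thesis using a by (simp only: b)
  qed
  have c2: "real (n - 1 + k choose (2*k)) = fact (2*k+m) / (fact (2*k) * fact m)"
  proof -
    have a: "real (2*k+m choose (2*k)) = fact (2*k+m) / (fact (2*k) * fact (2*k+m - 2*k))"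
      by (rule binomial_fact) simp
    have b: "2*k+m - 2*k = m" "n - 1 + k = 2*k+m" using m by simp_all
    show ?thesis using a by (simp only: b)
  qed
  have "bb n k = real n * fact (2*k+m) * 4 ^ k / (fact (Suc m) * fact (2 * k))"
  proof -
    have b: "n + k - 1 = 2*k+m" "n - k = Suc m" using m by simp_all
    show ?thesis unfolding bb_def by (simp only: b)
  qed
  also have "\<dots> = 4 ^ k * (fact (Suc (2*k+m)) / (fact (2*k) * fact (Suc m)) + fact (2*k+m) / (fact (2*k) * fact m)) / 2"
  proof -
    have g: "\<And>F A M c (x::real) y. F > 0 \<Longrightarrow> A > 0 \<Longrightarrow> M > 0 \<Longrightarrow> y \<ge> 0 \<Longrightarrow>
      (x + y + 1) * F * c / (((y + 1) * M) * A) = c * (((2 * x + y + 1) * F) / (A * ((y + 1) * M)) + F / (A * M)) / 2"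
    proof -
      fix F A M c x y :: real
      assume h: "F > 0" "A > 0" "M > 0" "y \<ge> 0"
      have gz: "\<And>z. z \<noteq> 0 \<Longrightarrow> (x + z) * F * c / ((z * M) * A) = c * (((2 * x + z) * F) / (A * (z * M)) + F / (A * M)) / 2"
        using h by (simp add: field_simps)
      have "y + 1 \<noteq> 0" using h by auto
      from gz[OF this] show "(x + y + 1) * F * c / (((y + 1) * M) * A) = c * (((2 * x + y + 1) * F) / (A * ((y + 1) * M)) + F / (A * M)) / 2"
        by (simp add: add.assoc)
    qed
    have e1: "real n = real k + real m + 1" using m by simp
    have e2: "fact (Suc (2*k+m)) = (2 * real k + real m + 1) * (fact (2*k+m) :: real)"
      by (simp only: fact_Suc) simp
    have e3: "fact (Suc m) = (real m + 1) * (fact m :: real)" by (simp only: fact_Suc) simp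
    show ?thesis unfolding e1 e2 e3 by (rule g) simp_all
  qed
  finally show ?thesis using c1 c2 by simp
qed

lemma pP_coeff:
  assumes "1 \<le> n"
  shows "coeff (pP n) k = (if k \<le> n then (-1) ^ k * bb n k else 0)"
proof (cases "k \<le> n")
  case True
  have m4: "(-4::real)^k = (-1)^k * 4^k" by (simp flip: power_mult_distrib)
  have "coeff (pP n) k = (-1)^k * (4 ^ k * (real (n + k choose (2*k)) + real (n - 1 + k choose (2*k))) / 2)"
    by (simp add: pP_def pA_coeff m4 field_simps)
  then show ?thesis using True by (simp only: bb_alt[OF assms True] if_True)
next
  case False
  then show ?thesis using False assms by (simp add: pP_def pA_coeff binomial_eq_0)
qed

lemma pP_trig:
  assumes "1 \<le> n"
  shows "cos t * poly (pP n) (sin t ^ 2) = cos t * cos (2 * real n * t)"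
proof -
  have "cos t * poly (pP n) (sin t ^ 2) = (cos t * poly (pA n) (sin t ^ 2) + cos t * poly (pA (n-1)) (sin t ^ 2)) / 2"
    by (simp add: pP_def algebra_simps)
  also have "\<dots> = (cos ((2 * real n + 1) * t) + cos ((2 * real (n - 1) + 1) * t)) / 2"
    by (simp only: pA_trig)
  also have "\<dots> = (cos (2 * real n * t + t) + cos (2 * real n * t - t)) / 2"
    using assms by (simp add: algebra_simps of_nat_diff)
  also have "\<dots> = cos t * cos (2 * real n * t)" by (simp only: cos_sum_prod) simp
  finally show ?thesis .
qed


theorem mainTheorem7:
  fixes n k :: nat
  assumes "n \<ge> 1" and "k \<le> n"
  shows "elem_sym k (\<lambda>j. (csc ((2 * real j - 1) * pi / (4 * real n)))^2) {1..n}
         = real n * fact (n + k - 1) * 4 ^ k / (fact (n - k) * fact (2 * k))"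
proof -
  define th where "th j = (2 * real j - 1) * pi / (4 * real n)" for j :: nat
  define x where "x j = (csc (th j))^2" for j
  have xdef: "(\<lambda>j. (csc ((2 * real j - 1) * pi / (4 * real n)))^2) = x"
    by (simp add: x_def th_def fun_eq_iff)
  have npos: "real n > 0" using assms by simp
  have th_bounds: "0 < th j \<and> th j < pi / 2" if "j \<in> {1..n}" for j
  proof -
    have j: "1 \<le> real j" "real j \<le> real n" using that by auto
    have "0 < (2 * real j - 1) * pi / (4 * real n)" using j npos by (simp add: field_simps)
    moreover have "(2 * real j - 1) * pi / (4 * real n) < pi / 2"
    proof -
      have "(2 * real j - 1) * pi < (2 * real n) * pi" using j pi_gt_zero by (intro mult_strict_right_mono) auto
      then show ?thesis using npos by (simp add: field_simps)
    qed
    ultimately show ?thesis by (simp add: th_def)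
  qed
  have sinpos: "sin (th j) > 0" if "j \<in> {1..n}" for j
    using th_bounds[OF that] by (intro sin_gt_zero) auto
  have cospos: "cos (th j) > 0" if "j \<in> {1..n}" for j
    using th_bounds[OF that] by (intro cos_gt_zero) auto
  have cos0: "cos (2 * real n * th j) = 0" if "j \<in> {1..n}" for j
  proof -
    have j: "j \<ge> 1" using that by auto
    have e: "2 * real n * th j = real (2 * j - 1) * (pi / 2)"
      using npos j by (simp add: th_def of_nat_diff field_simps)
    have o: "odd (2 * j - 1)" using j by simp
    show ?thesis unfolding e cos_zero_iff using o by blast
  qed
  define p where "p = reflect_poly (pP n)"
  define R where "R = (\<Prod>j\<in>{1..n}. [:- x j, 1:])"
  have cP: "coeff (pP n) i = (if i \<le> n then (-1) ^ i * bb n i else 0)" for i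
    using pP_coeff[OF assms(1)] .
  have bb0: "bb n 0 = 1" using assms(1) by (cases n) (simp_all add: bb_def)
  have bbn: "bb n n \<noteq> 0" using assms(1) by (simp add: bb_def)
  have degP: "degree (pP n) = n"
  proof (rule antisym)
    show "degree (pP n) \<le> n" by (rule degree_le) (simp add: cP)
    show "n \<le> degree (pP n)" by (rule le_degree) (simp add: cP bbn)
  qed
  have cp: "coeff p i = (if i \<le> n then coeff (pP n) (n - i) else 0)" for i
    by (simp add: p_def coeff_reflect_poly degP not_less)
  have inj: "inj_on x {1..n}"
  proof (rule inj_onI)
    fix i j assume i: "i \<in> {1..n}" and j: "j \<in> {1..n}" and e: "x i = x j"
    have "sin (th i) ^ 2 = sin (th j) ^ 2"
      using e sinpos[OF i] sinpos[OF j] by (simp add: x_def csc_def power_divide)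
    then have ss: "sin (th i) = sin (th j)"
      using sinpos[OF i] sinpos[OF j] by (simp add: power2_eq_iff_nonneg)
    have bi: "0 < th i" "th i < pi/2" "0 < th j" "th j < pi/2" using th_bounds[OF i] th_bounds[OF j] by auto
    have "th i = th j"
      by (rule sin_inj_pi[OF _ _ _ _ ss]) (use bi pi_gt_zero in linarith)+
    then show "i = j" using npos by (simp add: th_def)
  qed
  have "p = R"
  proof (rule poly_eqI_degree_lead_coeff[where n = n and A = "x ` {1..n}"])
    show "coeff p n = coeff R n"
      using vieta[of "{1..n}" 0 x] by (simp add: cp cP bb0 elem_sym_0 R_def)
    show "n \<le> card (x ` {1..n})" using inj by (simp add: card_image)
    show "degree p \<le> n" using degree_reflect_poly_le[of "pP n"] degP by (simp add: p_def)
    show "degree R \<le> n"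
    proof -
      have "degree R \<le> (\<Sum>j\<in>{1..n}. degree [:- x j, 1:])"
        unfolding R_def using degree_prod_sum_le[of "{1..n}" "\<lambda>j. [:- x j, 1:]"] by (simp add: o_def)
      then show ?thesis by simp
    qed
    fix z assume "z \<in> x ` {1..n}"
    then obtain j where j: "j \<in> {1..n}" and z: "z = x j" by auto
    have "poly R z = 0" unfolding R_def poly_prod z by (intro prod_zero bexI[of _ j]) (use j in auto)
    moreover have "poly p z = 0"
    proof -
      have xz: "x j \<noteq> 0" using sinpos[OF j] by (simp add: x_def csc_def)
      have inv: "inverse (x j) = sin (th j) ^ 2" by (simp add: x_def csc_def power_divide)
      have "cos (th j) * poly (pP n) (sin (th j) ^ 2) = 0"
        using pP_trig[OF assms(1), of "th j"] cos0[OF j] by simp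
      then have "poly (pP n) (sin (th j) ^ 2) = 0" using cospos[OF j] by simp
      then show ?thesis unfolding p_def z using xz by (simp add: poly_reflect_poly_nz degP inv)
    qed
    ultimately show "poly p z = poly R z" by simp
  qed
  then have "coeff p (n - k) = coeff R (n - k)" by simp
  moreover have "coeff p (n - k) = (-1) ^ k * bb n k" using assms by (simp add: cp cP)
  moreover have "coeff R (n - k) = (-1) ^ k * elem_sym k x {1..n}"
    using vieta[of "{1..n}" k x] assms by (simp add: R_def)
  ultimately have "elem_sym k x {1..n} = bb n k" by simp
  then show ?thesis by (simp add: xdef bb_def)
qed

end
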